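(* Let $(X,d)$ be a geodesic metric space, and assume that for every $\lambda>0$ the kernel $k_\lambda(x,y)=\exp(-\lambda\, d^2(x,y))$ is a positive definite kernel on $X$. Then $(X,d)$ is flat in the sense of Alexandrov.
   Context: A path $\gamma\colon[0,L]\to X$ is a geodesic from $x$ to $y$ if $\gamma(0)=x$, $\gamma(L)=y$ and $d(\gamma(t),\gamma(t'))=|t-t'|$ for all $t,t'\in[0,L]$. A metric space is a geodesic metric space if every pair of points is joined by a geodesic. A geodesic triangle consists of three points $a,b,c$ together with geodesics $\gamma_{ab},\gamma_{bc},\gamma_{ac}$ joining them. A geodesic metric space $(X,d)$ is flat in the sense of Alexandrov if every geodesic triangle in $X$ (viewed as a metric subspace with the restricted metric $d$) can be isometrically embedded (i.e. with distances preserved) into a Euclidean space. A positive definite (PD) kernel on a topological space $X$ is a continuous function $k\colon X\times X\to\mathbb{R}$ such that for all $n\in\mathbb{N}$, all $x_1,\dots,x_n\in X$ and all $c_1,\dots,c_n\in\mathbb{R}$, $\sum_{i,j}c_ic_jk(x_i,x_j)\ge 0$; $X$ carries the metric topology. *)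

theory Defs
  imports "HOL-Analysis.Analysis"
begin

definition geodesic_in :: "'a::metric_space set \<Rightarrow> (real \<Rightarrow> 'a) \<Rightarrow> real \<Rightarrow> 'a \<Rightarrow> 'a \<Rightarrow> bool" where
  "geodesic_in X \<gamma> L x y \<longleftrightarrow> 0 \<le> L \<and> \<gamma> ` {0..L} \<subseteq> X \<and> \<gamma> 0 = x \<and> \<gamma> L = y \<and>
     (\<forall>t\<in>{0..L}. \<forall>t'\<in>{0..L}. dist (\<gamma> t) (\<gamma> t') = \<bar>t - t'\<bar>)"

definition geodesic_metric_space :: "'a::metric_space set \<Rightarrow> bool" where
  "geodesic_metric_space X \<longleftrightarrow> (\<forall>x\<in>X. \<forall>y\<in>X. \<exists>\<gamma> L. geodesic_in X \<gamma> L x y)"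

definition eucl_dist :: "nat \<Rightarrow> (nat \<Rightarrow> real) \<Rightarrow> (nat \<Rightarrow> real) \<Rightarrow> real" where
  "eucl_dist n u v = sqrt (\<Sum>i<n. (u i - v i)^2)"

definition embeds_in_euclidean :: "'a::metric_space set \<Rightarrow> bool" where
  "embeds_in_euclidean T \<longleftrightarrow>
     (\<exists>n::nat. \<exists>f::'a \<Rightarrow> (nat \<Rightarrow> real). \<forall>p\<in>T. \<forall>q\<in>T. eucl_dist n (f p) (f q) = dist p q)"

definition alexandrov_flat :: "'a::metric_space set \<Rightarrow> bool" where
  "alexandrov_flat X \<longleftrightarrow> geodesic_metric_space X \<and>
    (\<forall>a b c gab gbc gac Lab Lbc Lac.
       a \<in> X \<and> b \<in> X \<and> c \<in> X \<and>
       geodesic_in X gab Lab a b \<and> geodesic_in X gbc Lbc b c \<and> geodesic_in X gac Lac a c \<longrightarrow>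
       embeds_in_euclidean (gab ` {0..Lab} \<union> gbc ` {0..Lbc} \<union> gac ` {0..Lac}))"

definition pd_kernel :: "'a::metric_space set \<Rightarrow> ('a \<Rightarrow> 'a \<Rightarrow> real) \<Rightarrow> bool" where
  "pd_kernel X k \<longleftrightarrow> continuous_on (X \<times> X) (\<lambda>(x, y). k x y) \<and>
    (\<forall>(n::nat) (xs::nat \<Rightarrow> 'a) (c::nat \<Rightarrow> real). (\<forall>i<n. xs i \<in> X) \<longrightarrow>
       0 \<le> (\<Sum>i<n. \<Sum>j<n. c i * c j * k (xs i) (xs j)))"

end

theory Submission
  imports Defs
begin
lemma exp_quad: fixes x::real assumes "0 \<le> x" shows "1 + x + x^2/2 \<le> exp x"
proof -
  have "(\<Sum>n<3. x^n / fact n) \<le> (\<Sum>n. x^n / fact n)"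
    by (rule sum_le_suminf) (use assms summable_exp in \<open>auto simp: divide_inverse mult.commute\<close>)
  also have "\<dots> = exp x" by (simp add: exp_def divide_inverse mult.commute)
  finally show ?thesis by (simp add: numeral_3_eq_3 power2_eq_square)
qed

lemma exp_neg_upper: fixes x::real assumes "0 \<le> x" shows "exp (-x) \<le> 1 - x + x^2/2"
proof -
  have p: "0 < 1 + x + x^2/2" using assms by (simp add: add_pos_nonneg)
  have "exp (-x) = 1 / exp x" by (simp add: exp_minus divide_inverse)
  also have "\<dots> \<le> 1 / (1 + x + x^2/2)" using exp_quad[OF assms] p by (simp add: frac_le)
  also have "\<dots> \<le> 1 - x + x^2/2"
  proof -
    have "1 \<le> (1 - x + x^2/2) * (1 + x + x^2/2)" by (simp add: algebra_simps power2_eq_square) (metis mult.assoc zero_le_mult_iff zero_le_square)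
    then show ?thesis using p by (simp add: divide_le_eq)
  qed
  finally show ?thesis .
qed

lemma E_bounds: fixes x::real assumes "0 \<le> x"
  shows "0 \<le> exp (-x) - 1 + x" "exp (-x) - 1 + x \<le> x^2/2"
  using exp_ge_add_one_self[of "-x"] exp_neg_upper[OF assms] by auto

lemma cnd:
  fixes n :: nat and X :: "'a::metric_space set"
  assumes pd: "\<And>lam::real. lam > 0 \<Longrightarrow> pd_kernel X (\<lambda>x y. exp (- lam * (dist x y)^2))"
    and xs: "\<forall>i<n. xs i \<in> X" and c: "(\<Sum>i<n. c i) = (0::real)"
  shows "(\<Sum>i<n. \<Sum>j<n. c i * c j * (dist (xs i) (xs j))\<^sup>2) \<le> 0"
proof -
  define t where "t i j = (dist (xs i) (xs j))\<^sup>2" for i j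
  define Q where "Q = (\<Sum>i<n. \<Sum>j<n. c i * c j * t i j)"
  define M where "M = (\<Sum>i<n. \<Sum>j<n. \<bar>c i * c j\<bar> * (t i j)\<^sup>2 / 2)"
  have M0: "M \<ge> 0" unfolding M_def by (intro sum_nonneg) auto
  have t0: "t i j \<ge> 0" for i j by (simp add: t_def)
  have zero: "(\<Sum>i<n. \<Sum>j<n. c i * c j) = 0"
    using c by (simp add: sum_distrib_left[symmetric] sum_distrib_right[symmetric])
  have zero2: "(\<Sum>i<n. \<Sum>j<n. c i * (c j * 2)) = 0"
    using c by (simp add: sum_distrib_left[symmetric] sum_distrib_right[symmetric])
  have key: "Q \<le> lam * M" if lp: "lam > 0" for lam
  proof -
    have "0 \<le> (\<Sum>i<n. \<Sum>j<n. c i * c j * exp (-lam * t i j))"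
      using conjunct2[OF pd[OF lp, unfolded pd_kernel_def], rule_format, OF xs[rule_format]] unfolding t_def by simp
    also have "\<dots> = (\<Sum>i<n. \<Sum>j<n. c i * c j * (exp (-(lam * t i j)) - 1 + lam * t i j))
        - (\<Sum>i<n. \<Sum>j<n. c i * c j) - lam * Q"
      using zero2 by (simp add: algebra_simps sum.distrib sum_subtractf sum_distrib_left Q_def)
    also have "\<dots> = (\<Sum>i<n. \<Sum>j<n. c i * c j * (exp (-(lam * t i j)) - 1 + lam * t i j)) - lam * Q"
      using zero by simp
    also have "\<dots> \<le> (\<Sum>i<n. \<Sum>j<n. \<bar>c i * c j\<bar> * ((lam * t i j)^2/2)) - lam * Q"
    proof -
      have "c i * c j * (exp (-(lam * t i j)) - 1 + lam * t i j) \<le> \<bar>c i * c j\<bar> * ((lam * t i j)^2/2)" for i j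
      proof -
        have tt: "0 \<le> lam * t i j" using lp t0[of i j] by simp
        note b = E_bounds[OF tt]
        have "c i * c j * (exp (-(lam * t i j)) - 1 + lam * t i j) \<le> \<bar>c i * c j\<bar> * (exp (-(lam * t i j)) - 1 + lam * t i j)"
          using b(1) by (metis abs_ge_self mult_right_mono)
        also have "\<dots> \<le> \<bar>c i * c j\<bar> * ((lam * t i j)^2/2)" using b(2) by (intro mult_left_mono) auto
        finally show ?thesis .
      qed
      then show ?thesis by (intro diff_right_mono sum_mono) auto
    qed
    also have "\<dots> = lam^2 * M - lam * Q"
      by (simp add: M_def sum_distrib_left power_mult_distrib algebra_simps)
    finally have "lam * Q \<le> lam * (lam * M)" by (simp add: power2_eq_square algebra_simps)
    then show ?thesis using lp by simp
  qed
  show ?thesis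
  proof (rule ccontr)
    assume "\<not> ?thesis"
    then have Qp: "Q > 0" by (simp add: Q_def t_def)
    define lam where "lam = Q / (M + 1)"
    have lp: "lam > 0" using Qp M0 by (simp add: lam_def)
    have "lam * M < Q" using Qp M0 by (simp add: lam_def field_simps)
    then show False using key[OF lp] by simp
  qed
qed

lemma poly0: fixes a D :: real assumes D: "D \<ge> 0" and h: "\<And>e. a*e - D*e^2 \<le> 0" shows "a = 0"
proof (rule ccontr)
  assume a: "a \<noteq> 0"
  define e where "e = a / (D + 1)"
  have nz: "D + 1 \<noteq> 0" using D by simp
  have "a*e - D*e^2 = a^2/(D+1)^2" unfolding e_def using nz
    by (simp add: power2_eq_square divide_simps) (simp add: algebra_simps)
  moreover have "a^2/(D+1)^2 > 0" using a D by simp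
  ultimately show False using h[of e] by simp
qed

lemma stewart:
  fixes X :: "'a::metric_space set"
  assumes pd: "\<And>lam::real. lam > 0 \<Longrightarrow> pd_kernel X (\<lambda>x y. exp (- lam * (dist x y)^2))"
    and X: "p \<in> X" "x \<in> X" "y \<in> X" "z \<in> X"
    and hxp: "dist x p = s*L" and hpy: "dist p y = (1-s)*L" and hxy: "dist x y = L"
  shows "(dist p z)\<^sup>2 = (1-s)*(dist x z)\<^sup>2 + s*(dist y z)\<^sup>2 - s*(1-s)*L\<^sup>2"
proof -
  define a where "a = (dist p z)\<^sup>2 - (1-s)*(dist x z)\<^sup>2 - s*(dist y z)\<^sup>2 + s*(1-s)*L\<^sup>2"
  have hpx: "dist p x = s*L" and hyp: "dist y p = (1-s)*L" and hyx: "dist y x = L"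
    using hxp hpy hxy by (simp_all add: dist_commute)
  have "a*e - (dist x z)\<^sup>2*e^2 \<le> 0" for e
  proof -
    define xs where "xs = (\<lambda>i::nat. [p,x,y,z] ! i)"
    define c where "c = (\<lambda>i::nat. [1, -(1-s)-e, -s, e] ! i)"
    have "(\<Sum>i<4. \<Sum>j<4. c i * c j * (dist (xs i) (xs j))\<^sup>2) \<le> 0"
      by (rule cnd[OF pd]) (auto simp: xs_def c_def less_Suc_eq numeral_eq_Suc X)
    moreover have "(\<Sum>i<4. \<Sum>j<4. c i * c j * (dist (xs i) (xs j))\<^sup>2) = 2*(a*e - (dist x z)\<^sup>2*e^2)"
      by (simp add: xs_def c_def numeral_eq_Suc hxp hpy hxy hpx hyp hyx dist_commute[of z] a_def algebra_simps power2_eq_square)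
    ultimately show ?thesis by simp
  qed
  then have "a = 0" by (intro poly0[of "(dist x z)\<^sup>2"]) auto
  then show ?thesis by (simp add: a_def)
qed

lemma triangle_R2:
  fixes l e g :: real
  assumes "0\<le>l" "0\<le>e" "0\<le>g" "g \<le> l+e" "l \<le> e+g" "e \<le> l+g"
  shows "\<exists>cx cy. cx\<^sup>2 + cy\<^sup>2 = e\<^sup>2 \<and> (cx-l)\<^sup>2 + cy\<^sup>2 = g\<^sup>2"
proof (cases "l = 0")
  case True
  then have "g = e" using assms by simp
  then show ?thesis using True by (intro exI[of _ e] exI[of _ 0]) simp
next
  case False
  then have lp: "l > 0" using assms by simp
  define cx where "cx = (l\<^sup>2 + e\<^sup>2 - g\<^sup>2) / (2*l)"
  have "\<bar>l - e\<bar> \<le> g" using assms by arith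
  from power_mono[OF this abs_ge_zero, of 2] have f1: "0 \<le> g\<^sup>2 - (l-e)\<^sup>2" by simp
  from power_mono[OF assms(4) assms(3), of 2] have f2: "0 \<le> (l+e)\<^sup>2 - g\<^sup>2" by simp
  have "(2*l*e)\<^sup>2 - (l\<^sup>2 + e\<^sup>2 - g\<^sup>2)\<^sup>2 = (g\<^sup>2 - (l-e)\<^sup>2) * ((l+e)\<^sup>2 - g\<^sup>2)"
    by (simp add: algebra_simps power2_eq_square)
  also have "\<dots> \<ge> 0" using f1 f2 by simp
  finally have "(l\<^sup>2 + e\<^sup>2 - g\<^sup>2)\<^sup>2 \<le> (2*l*e)\<^sup>2" by simp
  then have "(2*l)\<^sup>2 * cx\<^sup>2 \<le> (2*l)\<^sup>2 * e\<^sup>2" using lp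
    by (simp add: cx_def power_divide power_mult_distrib)
  then have ce: "cx\<^sup>2 \<le> e\<^sup>2" using lp by simp
  define cy where "cy = sqrt (e\<^sup>2 - cx\<^sup>2)"
  have cy2: "cy\<^sup>2 = e\<^sup>2 - cx\<^sup>2" using ce by (simp add: cy_def)
  have "(cx-l)\<^sup>2 + cy\<^sup>2 = e\<^sup>2 - 2*l*cx + l\<^sup>2" using cy2 by (simp add: power2_eq_square algebra_simps)
  also have "2*l*cx = l\<^sup>2 + e\<^sup>2 - g\<^sup>2" using lp by (simp add: cx_def)
  finally have "(cx-l)\<^sup>2 + cy\<^sup>2 = g\<^sup>2" by simp
  then show ?thesis using cy2 by (intro exI[of _ cx] exI[of _ cy]) simp
qed

lemma geo_facts:
  assumes g: "geodesic_in X g L x y" and s: "s \<in> {0..1}"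
  shows "g (s*L) \<in> X" "dist x (g (s*L)) = s*L" "dist (g (s*L)) y = (1-s)*L" "dist x y = L" "0 \<le> L"
    "x \<in> X" "y \<in> X"
proof -
  have L: "0 \<le> L" using g by (simp add: geodesic_in_def)
  have sl: "s*L \<in> {0..L}" using s L mult_right_mono[of s 1 L] by auto
  have z: "(0::real) \<in> {0..L}" "L \<in> {0..L}" using L by auto
  show "g (s*L) \<in> X" "x \<in> X" "y \<in> X" using g sl z unfolding geodesic_in_def by auto
  show "dist x (g (s*L)) = s*L" using g sl z s L unfolding geodesic_in_def by auto
  have "dist (g (s*L)) y = \<bar>s*L - L\<bar>" using g sl z unfolding geodesic_in_def by metis
  also have "\<dots> = (1-s)*L" using s L mult_right_mono[of s 1 L] by (simp add: abs_if algebra_simps)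
  finally show "dist (g (s*L)) y = (1-s)*L" .
  show "dist x y = L" using g z L unfolding geodesic_in_def by auto
  show "0 \<le> L" by (rule L)
qed

lemma flat_tri:
  fixes X :: "'a::metric_space set"
  assumes pd: "\<And>lam::real. lam > 0 \<Longrightarrow> pd_kernel X (\<lambda>x y. exp (- lam * (dist x y)^2))"
    and gab: "geodesic_in X gab Lab a b" and gbc: "geodesic_in X gbc Lbc b c"
    and gac: "geodesic_in X gac Lac a c"
  shows "embeds_in_euclidean (gab ` {0..Lab} \<union> gbc ` {0..Lbc} \<union> gac ` {0..Lac})"
proof -
  have s01: "(0::real) \<in> {0..1}" by simp
  have aX: "a \<in> X" and bX: "b \<in> X" and cX: "c \<in> X"
    using geo_facts(6,7)[OF gab s01] geo_facts(7)[OF gbc s01] by auto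
  have dab: "dist a b = Lab" and dbc: "dist b c = Lbc" and dac: "dist a c = Lac"
    using geo_facts(4)[OF gab s01] geo_facts(4)[OF gbc s01] geo_facts(4)[OF gac s01] by auto
  have dba: "dist b a = Lab" and dcb: "dist c b = Lbc" and dca: "dist c a = Lac"
    using dab dbc dac by (simp_all add: dist_commute)
  define R where "R p u \<longleftrightarrow> (\<exists>s\<in>{0..1}. (p = gab (s*Lab) \<and> u = (1-s, s, 0))
      \<or> (p = gbc (s*Lbc) \<and> u = (0, 1-s, s)) \<or> (p = gac (s*Lac) \<and> u = (1-s, 0, s)))" for p u
  have RX: "p \<in> X" if "R p u" for p u
    using that geo_facts(1)[OF gab] geo_facts(1)[OF gbc] geo_facts(1)[OF gac] unfolding R_def by auto
  have K: "(dist p z)\<^sup>2 = ua*(dist a z)\<^sup>2 + ub*(dist b z)\<^sup>2 + uc*(dist c z)\<^sup>2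
      - (ua*ub*Lab\<^sup>2 + ua*uc*Lac\<^sup>2 + ub*uc*Lbc\<^sup>2)"
    if "R p (ua,ub,uc)" "z \<in> X" for p z ua ub uc
  proof -
    from that(1) obtain s where s: "s \<in> {0..1}" and
      cs: "(p = gab (s*Lab) \<and> (ua,ub,uc) = (1-s, s, 0))
      \<or> (p = gbc (s*Lbc) \<and> (ua,ub,uc) = (0, 1-s, s)) \<or> (p = gac (s*Lac) \<and> (ua,ub,uc) = (1-s, 0, s))"
      unfolding R_def by blast
    from cs show ?thesis
    proof (elim disjE conjE)
      assume p: "p = gab (s*Lab)" and u: "(ua,ub,uc) = (1-s, s, 0)"
      note st = stewart[OF pd geo_facts(1)[OF gab s] aX bX that(2) geo_facts(2,3,4)[OF gab s]]
      from u have ue: "ua = 1-s" "ub = s" "uc = 0" by auto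
      show ?thesis using st p unfolding ue by (simp add: algebra_simps)
    next
      assume p: "p = gbc (s*Lbc)" and u: "(ua,ub,uc) = (0, 1-s, s)"
      note st = stewart[OF pd geo_facts(1)[OF gbc s] bX cX that(2) geo_facts(2,3,4)[OF gbc s]]
      from u have ue: "ua = 0" "ub = 1-s" "uc = s" by auto
      show ?thesis using st p unfolding ue by (simp add: algebra_simps)
    next
      assume p: "p = gac (s*Lac)" and u: "(ua,ub,uc) = (1-s, 0, s)"
      note st = stewart[OF pd geo_facts(1)[OF gac s] aX cX that(2) geo_facts(2,3,4)[OF gac s]]
      from u have ue: "ua = 1-s" "ub = 0" "uc = s" by auto
      show ?thesis using st p unfolding ue by (simp add: algebra_simps)
    qed
  qed
  have Rsum: "ua + ub + uc = 1" if "R p (ua,ub,uc)" for p ua ub uc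
    using that unfolding R_def by auto
  have M: "(dist p q)\<^sup>2 = -((ua-va)*(ub-vb)*Lab\<^sup>2 + (ua-va)*(uc-vc)*Lac\<^sup>2 + (ub-vb)*(uc-vc)*Lbc\<^sup>2)"
    if p: "R p (ua,ub,uc)" and q: "R q (va,vb,vc)" for p q ua ub uc va vb vc
  proof -
    have k1: "(dist p q)\<^sup>2 = ua*(dist a q)\<^sup>2 + ub*(dist b q)\<^sup>2 + uc*(dist c q)\<^sup>2
      - (ua*ub*Lab\<^sup>2 + ua*uc*Lac\<^sup>2 + ub*uc*Lbc\<^sup>2)" using K[OF p RX[OF q]] .
    have ka: "(dist a q)\<^sup>2 = vb*Lab\<^sup>2 + vc*Lac\<^sup>2 - (va* vb*Lab\<^sup>2 + va* vc*Lac\<^sup>2 + vb* vc*Lbc\<^sup>2)"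
      using K[OF q aX] by (simp add: dist_commute[of a q] dba dca)
    have kb: "(dist b q)\<^sup>2 = va*Lab\<^sup>2 + vc*Lbc\<^sup>2 - (va* vb*Lab\<^sup>2 + va* vc*Lac\<^sup>2 + vb* vc*Lbc\<^sup>2)"
      using K[OF q bX] by (simp add: dist_commute[of b q] dab dcb)
    have kc: "(dist c q)\<^sup>2 = va*Lac\<^sup>2 + vb*Lbc\<^sup>2 - (va* vb*Lab\<^sup>2 + va* vc*Lac\<^sup>2 + vb* vc*Lbc\<^sup>2)"
      using K[OF q cX] by (simp add: dist_commute[of c q] dac dbc)
    have su: "ua = 1 - ub - uc" using Rsum[OF p] by simp
    have sv: "va = 1 - vb - vc" using Rsum[OF q] by simp
    show ?thesis unfolding k1 ka kb kc su sv by (simp add: algebra_simps)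
  qed
  have Lpos: "0 \<le> Lab" "0 \<le> Lbc" "0 \<le> Lac" using dab dbc dac by auto
  obtain cx cy where cxy: "cx\<^sup>2 + cy\<^sup>2 = Lac\<^sup>2" "(cx - Lab)\<^sup>2 + cy\<^sup>2 = Lbc\<^sup>2"
    using triangle_R2[OF Lpos(1) Lpos(3) Lpos(2)] dist_triangle[of b c a] dist_triangle[of a b c]
      dist_triangle[of a c b] dab dbc dac dba dcb dca by auto
  define E where "E u = (\<lambda>i::nat. if i = 0 then fst (snd u)*Lab + snd (snd u)*cx
      else if i = 1 then snd (snd u)*cy else 0)" for u :: "real \<times> real \<times> real"
  have Ed: "eucl_dist 2 (E u) (E v) = dist p q" if p: "R p u" and q: "R q v" for p q u v
  proof -
    obtain ua ub uc where u: "u = (ua,ub,uc)" by (cases u) auto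
    obtain va vb vc where v: "v = (va,vb,vc)" by (cases v) auto
    have Lac2: "Lac\<^sup>2 = cx\<^sup>2 + cy\<^sup>2" and Lbc2: "Lbc\<^sup>2 = (cx - Lab)\<^sup>2 + cy\<^sup>2" using cxy by auto
    have su: "ua = 1 - ub - uc" using Rsum[of p ua ub uc] p u by simp
    have sv: "va = 1 - vb - vc" using Rsum[of q va vb vc] q v by simp
    have "(\<Sum>i<2. (E u i - E v i)\<^sup>2) = ((ub-vb)*Lab + (uc-vc)*cx)\<^sup>2 + ((uc-vc)*cy)\<^sup>2"
      by (simp add: E_def u v numeral_2_eq_2 algebra_simps)
    also have "\<dots> = (dist p q)\<^sup>2"
      unfolding M[OF p[unfolded u] q[unfolded v]] Lac2 Lbc2 su sv
      by (simp add: algebra_simps power2_eq_square)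
    finally show ?thesis by (simp add: eucl_dist_def)
  qed
  define T where "T = gab ` {0..Lab} \<union> gbc ` {0..Lbc} \<union> gac ` {0..Lac}"
  have Rex: "\<exists>u. R p u" if "p \<in> T" for p
  proof -
    have rep: "\<exists>s\<in>{0..1}. t = s * L" if "t \<in> {0..L}" for t L :: real
    proof (cases "L = 0")
      case True then show ?thesis using that by (intro bexI[of _ 0]) auto
    next
      case False then show ?thesis using that by (intro bexI[of _ "t/L"]) (auto simp: field_simps)
    qed
    from that show ?thesis unfolding T_def
    proof (elim UnE imageE)
      fix t assume "t \<in> {0..Lab}" "p = gab t"
      then obtain s where "s \<in> {0..1}" "p = gab (s*Lab)" using rep[of t Lab] by auto
      then have "R p (1-s, s, 0)" unfolding R_def by blast
      then show ?thesis by blast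
    next
      fix t assume "t \<in> {0..Lbc}" "p = gbc t"
      then obtain s where "s \<in> {0..1}" "p = gbc (s*Lbc)" using rep[of t Lbc] by auto
      then have "R p (0, 1-s, s)" unfolding R_def by blast
      then show ?thesis by blast
    next
      fix t assume "t \<in> {0..Lac}" "p = gac t"
      then obtain s where "s \<in> {0..1}" "p = gac (s*Lac)" using rep[of t Lac] by auto
      then have "R p (1-s, 0, s)" unfolding R_def by blast
      then show ?thesis by blast
    qed
  qed
  have "\<forall>p\<in>T. \<forall>q\<in>T. eucl_dist 2 (E (SOME u. R p u)) (E (SOME u. R q u)) = dist p q"
    using Ed Rex someI_ex by metis
  then show ?thesis unfolding embeds_in_euclidean_def T_def
    by (intro exI[of _ 2] exI[of _ "\<lambda>p. E (SOME u. R p u)"])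
qed

theorem theorem1:
  fixes X :: "'a::metric_space set"
  assumes "geodesic_metric_space X"
    and "\<And>lam::real. lam > 0 \<Longrightarrow> pd_kernel X (\<lambda>x y. exp (- lam * (dist x y)^2))"
  shows "alexandrov_flat X"
  unfolding alexandrov_flat_def using assms(1) flat_tri[OF assms(2)] by blast

end
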